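(* For any constants $\bar z\in[0,1]$ and $\bar\alpha>0$, the set $S_{\bar z,\bar\alpha}=\{(x_1,\dots,x_n)\in[0,1]^n:\max_{i\in\mathcal V}|x_i-\bar z|<\bar\alpha\}$ is finite-time robustly reachable from $[0,1]^n$ under control protocol (C6).
   Context: Fix $n\ge3$, $\mathcal V=\{1,\dots,n\}$, confidence thresholds $r_i\in(0,1]$, belief factors $\omega_i\in(0,1)$, $\eta>0$. States $x(t)\in[0,1]^n$. Neighbor set $\mathcal N_i(t)=\{j:|x_j(t)-x_i(t)|\le r_i\}$ (contains $i$), $\Pi_{[0,1]}(y)=\min\{1,\max\{0,y\}\}$, $x_{\rm ave}(t)=\frac1n\sum_ix_i(t)$. Control protocol (C6): $x_i(t+1)=\Pi_{[0,1]}\big(\omega_ix_{\rm ave}(t)+\frac{1-\omega_i}{|\mathcal N_i(t)|}[x_i(t)+\sum_{j\in\mathcal N_i(t)\setminus\{i\}}(x_j(t)+u_{ji}(t)+b_{ji}(t))]\big)$, where for $j\in\mathcal N_i(t)\setminus\{i\}$: $\delta_i(t)\in(0,\eta)$ is a chosen parameter, $u_{ji}(t)\in[-\eta+\delta_i(t),\eta-\delta_i(t)]$ a chosen control input, $b_{ji}(t)\in[-\delta_i(t),\delta_i(t)]$ an arbitrary uncertainty; the choices may depend on $x(0),\dots,x(t)$. A set $S\subseteq[0,1]^n$ is finite-time robustly reachable from $[0,1]^n$ under the protocol if there exist constants $T>0$ and $\varepsilon\in(0,\eta)$ such that for every $x(0)\in[0,1]^n$, either $x(0)\in S$, or one can choose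 $\delta_i(t)\in[\varepsilon,\eta)$ and $u_{ji}(t)\in[-\eta+\delta_i(t),\eta-\delta_i(t)]$ ($0\le t<T$, $i\in\mathcal V$, $j\in\mathcal N_i(t)\setminus\{i\}$) guaranteeing that for arbitrary $b_{ji}(t)\in[-\delta_i(t),\delta_i(t)]$ there is $t\in[1,T]$ with $x(t)\in S$. *)

theory Defs
  imports Complex_Main
begin

text \<open>Agents are indexed by 0,...,n-1 (the paper's 1,...,n). A state is a function
  nat => real of which only the components below n are meaningful.\<close>

type_synonym state = "nat \<Rightarrow> real"

definition nbr :: "nat \<Rightarrow> (nat \<Rightarrow> real) \<Rightarrow> state \<Rightarrow> nat \<Rightarrow> nat set" where
  "nbr n r x i = {j \<in> {..<n}. \<bar>x j - x i\<bar> \<le> r i}"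

definition proj01 :: "real \<Rightarrow> real" where
  "proj01 y = min 1 (max 0 y)"

definition xave :: "nat \<Rightarrow> state \<Rightarrow> real" where
  "xave n x = (\<Sum>i<n. x i) / real n"

definition c6_step ::
  "nat \<Rightarrow> (nat \<Rightarrow> real) \<Rightarrow> (nat \<Rightarrow> real) \<Rightarrow> state \<Rightarrow> (nat \<Rightarrow> nat \<Rightarrow> real)
     \<Rightarrow> (nat \<Rightarrow> nat \<Rightarrow> real) \<Rightarrow> nat \<Rightarrow> real" where
  "c6_step n r \<omega> x u b i =
     proj01 (\<omega> i * xave n x
       + (1 - \<omega> i) / real (card (nbr n r x i))
         * (x i + (\<Sum>j \<in> nbr n r x i - {i}. x j + u j i + b j i)))"

text \<open>The controller's choices at time t are given by
  strategies D (for delta_i(t)) and U (for u_ji(t)) that are functions of the history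
  [x(0),...,x(t)].\<close>
definition robustly_reachable ::
  "nat \<Rightarrow> (nat \<Rightarrow> real) \<Rightarrow> (nat \<Rightarrow> real) \<Rightarrow> real \<Rightarrow> state set \<Rightarrow> bool" where
  "robustly_reachable n r \<omega> \<eta> S \<longleftrightarrow>
    (\<exists>T::nat. T > 0 \<and> (\<exists>\<epsilon>::real. 0 < \<epsilon> \<and> \<epsilon> < \<eta> \<and>
      (\<forall>x0::state. (\<forall>i<n. 0 \<le> x0 i \<and> x0 i \<le> 1) \<longrightarrow>
         x0 \<in> S \<or>
         (\<exists>(D :: state list \<Rightarrow> nat \<Rightarrow> real) (U :: state list \<Rightarrow> nat \<Rightarrow> nat \<Rightarrow> real).
            (\<forall>h i. i < n \<longrightarrow> \<epsilon> \<le> D h i \<and> D h i < \<eta> \<and>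
                (\<forall>j. - \<eta> + D h i \<le> U h j i \<and> U h j i \<le> \<eta> - D h i)) \<and>
            (\<forall>(x :: nat \<Rightarrow> state) (b :: nat \<Rightarrow> nat \<Rightarrow> nat \<Rightarrow> real).
               x 0 = x0 \<and>
               (\<forall>t<T. \<forall>i<n. \<forall>j \<in> nbr n r (x t) i - {i}.
                   \<bar>b t j i\<bar> \<le> D (map x [0..<Suc t]) i) \<and>
               (\<forall>t<T. \<forall>i<n.
                   x (Suc t) i = c6_step n r \<omega> (x t) (U (map x [0..<Suc t])) (b t) i)
               \<longrightarrow> (\<exists>t \<in> {1..T}. x t \<in> S))))))"

definition S_set :: "nat \<Rightarrow> real \<Rightarrow> real \<Rightarrow> state set" where
  "S_set n zbar \<alpha> = {x. (\<forall>i<n. 0 \<le> x i \<and> x i \<le> 1) \<and>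
                         Max ((\<lambda>i. \<bar>x i - zbar\<bar>) ` {..<n}) < \<alpha>}"

end

theory Submission
  imports Defs
begin

lemma proj01_range: "0 \<le> proj01 y \<and> proj01 y \<le> 1"
  by (simp add: proj01_def)
lemma proj01_lip: "\<bar>proj01 a - proj01 b\<bar> \<le> \<bar>a - b\<bar>"
  by (simp add: proj01_def abs_if min_def max_def)
lemma proj01_id: "0 \<le> c \<Longrightarrow> c \<le> 1 \<Longrightarrow> proj01 c = c"
  by (simp add: proj01_def)
lemma proj01_mono: "a \<le> b \<Longrightarrow> proj01 a \<le> proj01 b"
  by (simp add: proj01_def min_def max_def)
lemma proj01_dist: "0 \<le> c \<Longrightarrow> c \<le> 1 \<Longrightarrow> \<bar>proj01 a - c\<bar> \<le> \<bar>a - c\<bar>"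
  using proj01_lip[of a c] proj01_id[of c] by simp

lemma pre_general:
  fixes x :: state and \<epsilon> w m M A :: real
  assumes i: "i < n" and rng: "\<forall>j<n. m \<le> x j \<and> x j \<le> M"
   and w: "w \<le> \<omega> i" "\<omega> i \<le> 1" "0 \<le> w"
   and A: "A \<le> M" "m \<le> A"
   and ub: "\<forall>j \<in> nbr n r x i - {i}. u j i = 0 \<and> \<bar>b j i\<bar> \<le> \<epsilon>"
   and ri: "0 \<le> r i" and e: "0 \<le> \<epsilon>"
  shows "\<omega> i * A + (1 - \<omega> i) / real (card (nbr n r x i)) * (x i + (\<Sum>j \<in> nbr n r x i - {i}. x j + u j i + b j i)) \<le> M - w*(M - A) + \<epsilon>"
   and "\<omega> i * A + (1 - \<omega> i) / real (card (nbr n r x i)) * (x i + (\<Sum>j \<in> nbr n r x i - {i}. x j + u j i + b j i)) \<ge> m + w*(A - m) - \<epsilon>"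
proof -
  define N where "N = nbr n r x i"
  have fin: "finite N" unfolding N_def nbr_def by simp
  have iN: "i \<in> N" unfolding N_def nbr_def using i ri by simp
  have Nsub: "N \<subseteq> {..<n}" unfolding N_def nbr_def by auto
  define c where "c = real (card N)"
  have c1: "c \<ge> 1" unfolding c_def using fin iN
    by (metis One_nat_def card_0_eq empty_iff less_one linorder_not_le of_nat_1 of_nat_le_iff)
  have cm: "real (card (N - {i})) = c - 1"
    proof -
    have "card N \<ge> 1" using fin iN by (metis One_nat_def Suc_leI card_gt_0_iff empty_iff)
    then show ?thesis by (simp add: c_def card_Diff_singleton[OF iN] of_nat_diff)
  qed
  define S where "S = (\<Sum>j\<in>N. x j)"
  define B where "B = (\<Sum>j\<in>N-{i}. b j i)"
  have eq: "x i + (\<Sum>j \<in> N - {i}. x j + u j i + b j i) = S + B"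
  proof -
    have "(\<Sum>j \<in> N - {i}. x j + u j i + b j i) = (\<Sum>j \<in> N - {i}. x j) + B"
      unfolding B_def using ub N_def by (simp add: sum.distrib)
    moreover have "x i + (\<Sum>j \<in> N - {i}. x j) = S"
      unfolding S_def using sum.remove[OF fin iN, of x] by simp
    ultimately show ?thesis by simp
  qed
  have SM: "S \<le> c * M" unfolding S_def c_def
    using sum_bounded_above[of N x M] rng Nsub by auto
  have Sm: "S \<ge> c * m" unfolding S_def c_def
    using sum_bounded_below[of N m x] rng Nsub by auto
  have Bb: "\<bar>B\<bar> \<le> (c - 1) * \<epsilon>"
  proof -
    have "\<bar>B\<bar> \<le> (\<Sum>j\<in>N-{i}. \<bar>b j i\<bar>)" unfolding B_def by (rule sum_abs)
    also have "\<dots> \<le> real (card (N - {i})) * \<epsilon>"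
      using sum_bounded_above[of "N-{i}" "\<lambda>j. \<bar>b j i\<bar>" \<epsilon>] ub N_def by auto
    finally show ?thesis using cm by simp
  qed
  have SMc: "S / c \<le> M" using SM c1 by (simp add: divide_le_eq mult.commute)
  have Smc: "S / c \<ge> m" using Sm c1 by (simp add: le_divide_eq mult.commute)
  have Bc: "\<bar>B / c\<bar> \<le> \<epsilon>"
  proof -
    have "\<bar>B / c\<bar> = \<bar>B\<bar> / c" using c1 by simp
    also have "\<dots> \<le> (c-1)*\<epsilon>/c" using Bb c1 by (simp add: divide_right_mono)
    also have "\<dots> \<le> \<epsilon>" using c1 e by (simp add: divide_le_eq algebra_simps)
    finally show ?thesis .
  qed
  have form: "\<omega> i * A + (1 - \<omega> i) / c * (S + B) = \<omega> i * A + (1 - \<omega> i) * (S/c) + (1 - \<omega> i) * (B/c)"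
    using c1 by (simp add: field_simps)
  have b1: "(1 - \<omega> i) * (B/c) \<le> \<epsilon>" "(1 - \<omega> i) * (B/c) \<ge> - \<epsilon>"
  proof -
    have "\<bar>(1 - \<omega> i) * (B/c)\<bar> \<le> 1 * \<epsilon>"
      unfolding abs_mult using w Bc e by (intro mult_mono) auto
    then show "(1 - \<omega> i) * (B/c) \<le> \<epsilon>" "(1 - \<omega> i) * (B/c) \<ge> - \<epsilon>" by (simp_all only: abs_le_iff) linarith+
  qed
  have s1: "(1 - \<omega> i) * (S/c) \<le> (1 - \<omega> i) * M" using SMc w by (metis diff_ge_0_iff_ge mult_left_mono)
  have s2: "(1 - \<omega> i) * (S/c) \<ge> (1 - \<omega> i) * m" using Smc w by (metis diff_ge_0_iff_ge mult_left_mono)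
  have w1: "w * (M - A) \<le> \<omega> i * (M - A)" using w A by (simp add: mult_right_mono)
  have w2: "w * (A - m) \<le> \<omega> i * (A - m)" using w A by (simp add: mult_right_mono)
  show "\<omega> i * A + (1 - \<omega> i) / real (card (nbr n r x i)) * (x i + (\<Sum>j \<in> nbr n r x i - {i}. x j + u j i + b j i)) \<le> M - w*(M - A) + \<epsilon>"
    using eq form b1 s1 w1 unfolding N_def[symmetric] c_def[symmetric] by (simp add: algebra_simps)
  show "\<omega> i * A + (1 - \<omega> i) / real (card (nbr n r x i)) * (x i + (\<Sum>j \<in> nbr n r x i - {i}. x j + u j i + b j i)) \<ge> m + w*(A - m) - \<epsilon>"
    using eq form b1 s2 w2 unfolding N_def[symmetric] c_def[symmetric] by (simp add: algebra_simps)
qed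

lemma pre_mode:
  fixes x :: state and \<epsilon> v :: real
  assumes n: "n \<ge> 2" and i: "i < n" and N: "nbr n r x i = {..<n}"
   and ub: "\<forall>j \<in> {..<n} - {i}. u j i = v \<and> \<bar>b j i\<bar> \<le> \<epsilon>"
   and w: "\<omega> i \<le> 1" "0 \<le> \<omega> i" and e: "0 \<le> \<epsilon>"
  shows "\<bar>\<omega> i * xave n x + (1 - \<omega> i) / real (card (nbr n r x i)) * (x i + (\<Sum>j \<in> nbr n r x i - {i}. x j + u j i + b j i))
          - (xave n x + (1 - \<omega> i) * (real n - 1) / real n * v)\<bar> \<le> \<epsilon>"
proof -
  define B where "B = (\<Sum>j\<in>{..<n}-{i}. b j i)"
  have fin: "finite ({..<n}::nat set)" by simp
  have iN: "i \<in> {..<n}" using i by simp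
  have cm: "real (card ({..<n} - {i})) = real n - 1" using i by (simp add: of_nat_diff)
  have np: "real n > 0" using n by simp
  have eq: "x i + (\<Sum>j \<in> {..<n} - {i}. x j + u j i + b j i) = real n * xave n x + (real n - 1) * v + B"
  proof -
    have "(\<Sum>j \<in> {..<n} - {i}. x j + u j i + b j i) = (\<Sum>j \<in> {..<n} - {i}. x j) + (real n - 1) * v + B"
      unfolding B_def using ub cm by (simp add: sum.distrib)
    moreover have "x i + (\<Sum>j \<in> {..<n} - {i}. x j) = (\<Sum>j<n. x j)"
      using sum.remove[OF fin iN, of x] by simp
    moreover have "(\<Sum>j<n. x j) = real n * xave n x" unfolding xave_def using np by simp
    ultimately show ?thesis by simp
  qed
  have Bb: "\<bar>B\<bar> \<le> (real n - 1) * \<epsilon>"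
  proof -
    have "\<bar>B\<bar> \<le> (\<Sum>j\<in>{..<n}-{i}. \<bar>b j i\<bar>)" unfolding B_def by (rule sum_abs)
    also have "\<dots> \<le> real (card ({..<n} - {i})) * \<epsilon>"
      using sum_bounded_above[of "{..<n}-{i}" "\<lambda>j. \<bar>b j i\<bar>" \<epsilon>] ub by auto
    finally show ?thesis using cm by simp
  qed
  have Bc: "\<bar>B / real n\<bar> \<le> \<epsilon>"
  proof -
    have "\<bar>B / real n\<bar> = \<bar>B\<bar> / real n" using np by simp
    also have "\<dots> \<le> (real n - 1)*\<epsilon>/real n" using Bb np by (simp add: divide_right_mono)
    also have "\<dots> \<le> \<epsilon>" using np e by (simp add: divide_le_eq algebra_simps)
    finally show ?thesis .
  qed
  have form: "\<omega> i * xave n x + (1 - \<omega> i) / real n * (real n * xave n x + (real n - 1) * v + B)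
     - (xave n x + (1 - \<omega> i) * (real n - 1) / real n * v) = (1 - \<omega> i) * (B / real n)"
    using np by (simp add: field_simps)
  have "\<bar>(1 - \<omega> i) * (B / real n)\<bar> \<le> 1 * \<epsilon>"
    unfolding abs_mult using w Bc e by (intro mult_mono) auto
  then show ?thesis using form eq N by simp
qed


lemma xave_bounds:
  assumes "n > 0" "\<forall>j<n. m \<le> y j \<and> y j \<le> M"
  shows "m \<le> xave n y" "xave n y \<le> M"
proof -
  have "(\<Sum>j<n. y j) \<le> real n * M" using sum_bounded_above[of "{..<n}" y M] assms by auto
  then show "xave n y \<le> M" unfolding xave_def using assms by (simp add: divide_le_eq mult.commute)
  have "(\<Sum>j<n. y j) \<ge> real n * m" using sum_bounded_below[of "{..<n}" m y] assms by auto
  then show "m \<le> xave n y" unfolding xave_def using assms by (simp add: le_divide_eq mult.commute)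
qed

lemma xave_close:
  assumes "n > 0" "\<forall>j<n. \<bar>y j - c\<bar> \<le> e"
  shows "\<bar>xave n y - c\<bar> \<le> e"
proof -
  have h: "\<forall>j<n. c - e \<le> y j \<and> y j \<le> c + e" using assms(2) by (auto simp: abs_le_iff)
  show ?thesis using xave_bounds[OF assms(1) h] by (simp add: abs_le_iff)
qed

lemma S_setI:
  assumes "n > 0" "\<forall>i<n. 0 \<le> y i \<and> y i \<le> 1" "\<forall>i<n. \<bar>y i - zbar\<bar> < \<alpha>"
  shows "y \<in> S_set n zbar \<alpha>"
proof -
  have "Max ((\<lambda>i. \<bar>y i - zbar\<bar>) ` {..<n}) < \<alpha>"
    using assms by (subst Max_less_iff) auto
  then show ?thesis unfolding S_set_def using assms by auto
qed


lemma spread_step: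
  fixes x :: state and \<epsilon> wm s :: real
  assumes n: "n > 0" and sp: "\<forall>i<n. \<forall>k<n. \<bar>x i - x k\<bar> \<le> s"
   and om: "\<forall>i<n. wm \<le> \<omega> i \<and> \<omega> i \<le> 1" and wm: "0 \<le> wm" "wm \<le> 1"
   and rr: "\<forall>i<n. 0 \<le> r i"
   and ub: "\<forall>i<n. \<forall>j\<in>nbr n r x i - {i}. u j i = 0 \<and> \<bar>b j i\<bar> \<le> \<epsilon>" and e: "0 \<le> \<epsilon>"
  shows "\<forall>i<n. \<forall>k<n. \<bar>c6_step n r \<omega> x u b i - c6_step n r \<omega> x u b k\<bar> \<le> (1 - wm) * s + 2 * \<epsilon>"
proof (intro allI impI)
  fix i k assume i: "i < n" and k: "k < n"
  define M where "M = Max (x ` {..<n})"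
  define m where "m = Min (x ` {..<n})"
  have ne: "x ` {..<n} \<noteq> {}" using n by auto
  have rng: "\<forall>j<n. m \<le> x j \<and> x j \<le> M" unfolding M_def m_def by auto
  obtain i1 where i1: "i1 < n" "M = x i1" unfolding M_def using Max_in[OF _ ne] by auto
  obtain k1 where k1: "k1 < n" "m = x k1" unfolding m_def using Min_in[OF _ ne] by auto
  have Mm: "M - m \<le> s" using sp i1 k1 by fastforce
  define A where "A = xave n x"
  have A: "m \<le> A" "A \<le> M" unfolding A_def using xave_bounds[OF n rng] by auto
  define P where "P = (\<lambda>i. \<omega> i * A + (1 - \<omega> i) / real (card (nbr n r x i)) * (x i + (\<Sum>j \<in> nbr n r x i - {i}. x j + u j i + b j i)))"
  have ceq: "\<And>i. c6_step n r \<omega> x u b i = proj01 (P i)" unfolding c6_step_def P_def A_def by simp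
  have up: "\<And>i. i < n \<Longrightarrow> P i \<le> M - wm*(M - A) + \<epsilon>"
    unfolding P_def by (rule pre_general(1)[OF _ rng]) (use om wm A rr ub e in auto)
  have lo: "\<And>i. i < n \<Longrightarrow> P i \<ge> m + wm*(A - m) - \<epsilon>"
    unfolding P_def by (rule pre_general(2)[OF _ rng]) (use om wm A rr ub e in auto)
  have key: "\<And>i k. i < n \<Longrightarrow> k < n \<Longrightarrow> proj01 (P i) - proj01 (P k) \<le> (1 - wm) * s + 2 * \<epsilon>"
  proof -
    fix i k assume "i < n" "k < n"
    have "proj01 (P i) - proj01 (P k) \<le> proj01 (M - wm*(M - A) + \<epsilon>) - proj01 (m + wm*(A - m) - \<epsilon>)"
      using proj01_mono up lo \<open>i<n\<close> \<open>k<n\<close> by (meson diff_mono)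
    also have "\<dots> \<le> \<bar>(M - wm*(M - A) + \<epsilon>) - (m + wm*(A - m) - \<epsilon>)\<bar>"
      using proj01_lip abs_le_D1 by blast
    also have "\<dots> = (1 - wm) * (M - m) + 2 * \<epsilon>"
    proof -
      have "(M - wm*(M - A) + \<epsilon>) - (m + wm*(A - m) - \<epsilon>) = (1 - wm) * (M - m) + 2 * \<epsilon>"
        by (simp add: algebra_simps)
      moreover have "(1 - wm) * (M - m) \<ge> 0" using wm A by simp
      ultimately show ?thesis using e by simp
    qed
    also have "\<dots> \<le> (1 - wm) * s + 2 * \<epsilon>" using Mm wm by (simp add: mult_left_mono)
    finally show "proj01 (P i) - proj01 (P k) \<le> (1 - wm) * s + 2 * \<epsilon>" .
  qed
  show "\<bar>c6_step n r \<omega> x u b i - c6_step n r \<omega> x u b k\<bar> \<le> (1 - wm) * s + 2 * \<epsilon>"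
    unfolding ceq using key[OF i k] key[OF k i] by (simp add: abs_le_iff)
qed

lemma mode_step:
  fixes x :: state and \<epsilon> sh rm :: real
  assumes n: "n \<ge> 2" and sp: "\<forall>i<n. \<forall>k<n. \<bar>x i - x k\<bar> \<le> rm" and rr: "\<forall>i<n. rm \<le> r i"
   and om: "\<forall>i<n. 0 \<le> \<omega> i \<and> \<omega> i < 1"
   and c: "0 \<le> xave n x + sh" "xave n x + sh \<le> 1"
   and ub: "\<forall>i<n. \<forall>j\<in>nbr n r x i - {i}. u j i = sh * real n / ((1 - \<omega> i) * (real n - 1)) \<and> \<bar>b j i\<bar> \<le> \<epsilon>"
   and e: "0 \<le> \<epsilon>"
  shows "\<forall>i<n. \<bar>c6_step n r \<omega> x u b i - (xave n x + sh)\<bar> \<le> \<epsilon>"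
proof (intro allI impI)
  fix i assume i: "i < n"
  have N: "nbr n r x i = {..<n}" unfolding nbr_def using sp rr i by fastforce
  have ub': "\<forall>j \<in> {..<n} - {i}. u j i = sh * real n / ((1 - \<omega> i) * (real n - 1)) \<and> \<bar>b j i\<bar> \<le> \<epsilon>"
    using ub i N by auto
  have w: "\<omega> i \<le> 1" "0 \<le> \<omega> i" "\<omega> i < 1" using om i by auto
  have np: "real n - 1 > 0" using n by simp
  have simpl: "(1 - \<omega> i) * (real n - 1) / real n * (sh * real n / ((1 - \<omega> i) * (real n - 1))) = sh"
  proof -
    have a: "(1 - \<omega> i) * (real n - 1) \<noteq> 0" using w np by simp
    have aux: "\<And>a N sh::real. a \<noteq> 0 \<Longrightarrow> N \<noteq> 0 \<Longrightarrow> a / N * (sh * N / a) = sh"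
      by (simp add: field_simps)
    show ?thesis using aux[OF a, of "real n" sh] n by simp
  qed
  have "\<bar>\<omega> i * xave n x + (1 - \<omega> i) / real (card (nbr n r x i)) * (x i + (\<Sum>j \<in> nbr n r x i - {i}. x j + u j i + b j i))
          - (xave n x + sh)\<bar> \<le> \<epsilon>"
    using pre_mode[where \<omega>=\<omega> and u=u and b=b and i=i and x=x and r=r, OF n i N ub' w(1) w(2) e] simpl by simp
  then show "\<bar>c6_step n r \<omega> x u b i - (xave n x + sh)\<bar> \<le> \<epsilon>"
    unfolding c6_step_def using proj01_dist[OF c] order_trans by blast
qed


theorem lemma7:
  fixes n :: nat and r \<omega> :: "nat \<Rightarrow> real" and \<eta> zbar \<alpha> :: real
  assumes "n \<ge> 3"
    and "\<forall>i<n. 0 < r i \<and> r i \<le> 1"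
    and "\<forall>i<n. 0 < \<omega> i \<and> \<omega> i < 1"
    and "\<eta> > 0"
    and "0 \<le> zbar" and "zbar \<le> 1"
    and "\<alpha> > 0"
  shows "robustly_reachable n r \<omega> \<eta> (S_set n zbar \<alpha>)"
proof -
  note rA = assms(2) and oA = assms(3)
  have n0: "n > 0" "n \<ge> 2" using assms(1) by auto
  have ne: "{..<n} \<noteq> {}" using n0 by (auto simp: lessThan_empty_iff)
  define rm where "rm = Min (r ` {..<n})"
  define wm where "wm = Min (\<omega> ` {..<n})"
  define wM where "wM = Max (\<omega> ` {..<n})"
  have rm: "rm > 0" "\<forall>i<n. rm \<le> r i"
  proof -
    have "rm \<in> r ` {..<n}" unfolding rm_def using ne by (intro Min_in) auto
    then obtain i where "i < n" "rm = r i" by auto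
    then show "rm > 0" using rA by auto
    show "\<forall>i<n. rm \<le> r i" unfolding rm_def by simp
  qed
  have wm: "wm > 0" "\<forall>i<n. wm \<le> \<omega> i" "wm < 1"
  proof -
    have "wm \<in> \<omega> ` {..<n}" unfolding wm_def using ne by (intro Min_in) auto
    then obtain i where "i < n" "wm = \<omega> i" by auto
    then show "wm > 0" "wm < 1" using oA by auto
    show "\<forall>i<n. wm \<le> \<omega> i" unfolding wm_def by simp
  qed
  have wM: "wM < 1" "\<forall>i<n. \<omega> i \<le> wM"
  proof -
    have "wM \<in> \<omega> ` {..<n}" unfolding wM_def using ne by (intro Max_in) auto
    then obtain i where "i < n" "wM = \<omega> i" by auto
    then show "wM < 1" using oA by auto
    show "\<forall>i<n. \<omega> i \<le> wM" unfolding wM_def by simp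
  qed
  define \<kappa> where "\<kappa> = (1 - wM) * (real n - 1) / real n"
  have \<kappa>: "\<kappa> > 0" unfolding \<kappa>_def using wM n0 by simp
  define \<epsilon> where "\<epsilon> = min (min (\<eta>/2) (wm*rm/8)) (min (\<alpha>/2) (\<kappa>*\<eta>/4))"
  have e: "\<epsilon> > 0" "\<epsilon> \<le> \<eta>/2" "\<epsilon> \<le> wm*rm/8" "\<epsilon> \<le> \<alpha>/2" "\<epsilon> \<le> \<kappa>*\<eta>/4"
    unfolding \<epsilon>_def using assms(4,7) wm rm \<kappa> by auto
  have e2: "\<epsilon> \<le> rm/2"
  proof -
    have "wm*rm \<le> 1*rm" using wm rm by (intro mult_right_mono) auto
    then show ?thesis using e by simp
  qed
  have e3: "2*\<epsilon>/wm \<le> rm/4" using e(3) wm by (simp add: divide_le_eq field_simps)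
  define \<sigma> where "\<sigma> = \<kappa>*(\<eta> - \<epsilon>)"
  define \<rho> where "\<rho> = \<sigma> - \<epsilon>"
  have \<sigma>: "\<sigma> \<ge> \<kappa>*\<eta>/2" unfolding \<sigma>_def
  proof -
    have "\<kappa> * (\<eta>/2) \<le> \<kappa> * (\<eta> - \<epsilon>)" using e \<kappa> by (intro mult_left_mono) auto
    then show "\<kappa>*\<eta>/2 \<le> \<kappa> * (\<eta> - \<epsilon>)" by simp
  qed
  have \<rho>: "\<rho> > 0" unfolding \<rho>_def proof -
    have "\<kappa>*\<eta> > 0" using \<kappa> assms(4) by simp
    then show "\<sigma> - \<epsilon> > 0" using \<sigma> e(5) by linarith
  qed
  have \<sigma>0: "\<sigma> > 0" using \<rho> e unfolding \<rho>_def by simp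
  define q where "q = 1 - wm"
  have q: "0 \<le> q" "q < 1" unfolding q_def using wm by auto
  obtain T1 where T1: "q ^ T1 < rm/2" using real_arch_pow_inv[of "rm/2" q] q rm by auto
  obtain K :: nat where K: "1 < real K * \<rho>" using reals_Archimedean3[OF \<rho>] by blast
  define T where "T = T1 + K + 1"
  define mode where "mode = (\<lambda>x::state. \<forall>i<n. \<forall>k<n. \<bar>x i - x k\<bar> \<le> rm)"
  define shift where "shift = (\<lambda>x::state. max (-\<sigma>) (min \<sigma> (zbar - xave n x)))"
  define D where "D = (\<lambda>(h::state list) (i::nat). \<epsilon>)"
  define U where "U = (\<lambda>(h::state list) (j::nat) (i::nat). if mode (last h) then shift (last h) * real n / ((1 - \<omega> i) * (real n - 1)) else 0)"
  have ctrl: "\<forall>h i. i < n \<longrightarrow> \<epsilon> \<le> D h i \<and> D h i < \<eta> \<and>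
                (\<forall>j. - \<eta> + D h i \<le> U h j i \<and> U h j i \<le> \<eta> - D h i)"
  proof (intro allI impI conjI)
    fix h i j assume i: "i < n"
    show "\<epsilon> \<le> D h i" "D h i < \<eta>" unfolding D_def using e assms(4) by auto
    have "\<bar>U h j i\<bar> \<le> \<eta> - \<epsilon>"
    proof (cases "mode (last h)")
      case False then show ?thesis unfolding U_def using e by simp
    next
      case True
      have sh: "\<bar>shift (last h)\<bar> \<le> \<sigma>" unfolding shift_def using \<sigma>0 by auto
      have pos: "(1 - \<omega> i) * (real n - 1) > 0" using oA i n0 by simp
      have "\<bar>U h j i\<bar> = \<bar>shift (last h)\<bar> * real n / ((1 - \<omega> i) * (real n - 1))"
      proof -
        have a1: "\<bar>1 - \<omega> i\<bar> = 1 - \<omega> i" "\<bar>real n - 1\<bar> = real n - 1" using oA i n0 by auto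
        show ?thesis unfolding U_def using True pos by (simp add: abs_mult a1)
      qed
      also have "\<dots> \<le> \<sigma> * real n / ((1 - \<omega> i) * (real n - 1))"
        using sh pos by (simp add: divide_right_mono mult_right_mono)
      also have "\<dots> = (1 - wM) / (1 - \<omega> i) * (\<eta> - \<epsilon>)"
      proof -
        have aux: "\<And>A B N Dd E :: real. B \<noteq> 0 \<Longrightarrow> N \<noteq> 0 \<Longrightarrow> Dd \<noteq> 0 \<Longrightarrow>
            A * B / N * E * N / (Dd * B) = A / Dd * E" by (simp add: field_simps)
        have "real n - 1 \<noteq> 0" "real n \<noteq> 0" "1 - \<omega> i \<noteq> 0" using n0 oA i by auto
        from aux[OF this, of "1 - wM" "\<eta> - \<epsilon>"] show ?thesis unfolding \<sigma>_def \<kappa>_def by simp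
      qed
      also have "\<dots> \<le> 1 * (\<eta> - \<epsilon>)"
        using wM oA i e by (intro mult_right_mono) auto
      finally show ?thesis by simp
    qed
    then show "- \<eta> + D h i \<le> U h j i" "U h j i \<le> \<eta> - D h i" unfolding D_def by auto
  qed
  have main: "\<forall>(x :: nat \<Rightarrow> state) (b :: nat \<Rightarrow> nat \<Rightarrow> nat \<Rightarrow> real).
               x 0 = x0 \<and>
               (\<forall>t<T. \<forall>i<n. \<forall>j \<in> nbr n r (x t) i - {i}.
                   \<bar>b t j i\<bar> \<le> D (map x [0..<Suc t]) i) \<and>
               (\<forall>t<T. \<forall>i<n.
                   x (Suc t) i = c6_step n r \<omega> (x t) (U (map x [0..<Suc t])) (b t) i)
               \<longrightarrow> (\<exists>t \<in> {1..T}. x t \<in> S_set n zbar \<alpha>)"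
    if x0: "\<forall>i<n. 0 \<le> x0 i \<and> x0 i \<le> 1" for x0 :: state
  proof (intro allI impI)
    fix x :: "nat \<Rightarrow> state" and b :: "nat \<Rightarrow> nat \<Rightarrow> nat \<Rightarrow> real"
    assume H: "x 0 = x0 \<and>
               (\<forall>t<T. \<forall>i<n. \<forall>j \<in> nbr n r (x t) i - {i}.
                   \<bar>b t j i\<bar> \<le> D (map x [0..<Suc t]) i) \<and>
               (\<forall>t<T. \<forall>i<n.
                   x (Suc t) i = c6_step n r \<omega> (x t) (U (map x [0..<Suc t])) (b t) i)"
    define u where "u = (\<lambda>t (j::nat) (i::nat). if mode (x t) then shift (x t) * real n / ((1 - \<omega> i) * (real n - 1)) else 0)"
    have bc: "\<forall>t<T. \<forall>i<n. \<forall>j \<in> nbr n r (x t) i - {i}. \<bar>b t j i\<bar> \<le> \<epsilon>"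
      using H unfolding D_def by simp
    have Ueq: "\<And>t. U (map x [0..<Suc t]) = u t" unfolding U_def u_def by (simp add: fun_eq_iff)
    have dyn: "\<forall>t<T. \<forall>i<n. x (Suc t) i = c6_step n r \<omega> (x t) (u t) (b t) i"
      using H Ueq by simp
    have R: "\<forall>i<n. 0 \<le> x t i \<and> x t i \<le> 1" if "t \<le> T" for t
    proof (cases t)
      case 0 then show ?thesis using H x0 by simp
    next
      case (Suc t') then show ?thesis using dyn that proj01_range unfolding c6_step_def by simp
    qed
    have SP: "\<forall>i<n. \<forall>k<n. \<bar>x (Suc t) i - x (Suc t) k\<bar> \<le> q * s + 2 * \<epsilon>"
      if t: "t < T" and nm: "\<not> mode (x t)" and sp: "\<forall>i<n. \<forall>k<n. \<bar>x t i - x t k\<bar> \<le> s" for t s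
    proof -
      have ub: "\<forall>i<n. \<forall>j\<in>nbr n r (x t) i - {i}. u t j i = 0 \<and> \<bar>b t j i\<bar> \<le> \<epsilon>"
        using bc t nm unfolding u_def by simp
      have "\<forall>i<n. \<forall>k<n. \<bar>c6_step n r \<omega> (x t) (u t) (b t) i - c6_step n r \<omega> (x t) (u t) (b t) k\<bar> \<le> (1 - wm) * s + 2 * \<epsilon>"
        by (rule spread_step[OF n0(1) sp]) (use wm oA rA ub e in \<open>auto simp: less_imp_le\<close>)
      then show ?thesis using dyn t unfolding q_def by simp
    qed
    have MS: "\<forall>i<n. \<bar>x (Suc t) i - (xave n (x t) + shift (x t))\<bar> \<le> \<epsilon>"
         "0 \<le> xave n (x t) + shift (x t)" "xave n (x t) + shift (x t) \<le> 1"
      if t: "t < T" and md: "mode (x t)" for t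
    proof -
      have a: "0 \<le> xave n (x t)" "xave n (x t) \<le> 1" using xave_bounds[OF n0(1) R] t by auto
      show c: "0 \<le> xave n (x t) + shift (x t)" "xave n (x t) + shift (x t) \<le> 1"
        unfolding shift_def using a assms(5,6) \<sigma>0 by (auto simp: max_def min_def)
      have ub: "\<forall>i<n. \<forall>j\<in>nbr n r (x t) i - {i}. u t j i = shift (x t) * real n / ((1 - \<omega> i) * (real n - 1)) \<and> \<bar>b t j i\<bar> \<le> \<epsilon>"
        using bc t md unfolding u_def by simp
      have "\<forall>i<n. \<bar>c6_step n r \<omega> (x t) (u t) (b t) i - (xave n (x t) + shift (x t))\<bar> \<le> \<epsilon>"
        by (rule mode_step[OF n0(2) _ rm(2) _ c ub]) (use md oA e in \<open>auto simp: mode_def less_imp_le\<close>)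
      then show "\<forall>i<n. \<bar>x (Suc t) i - (xave n (x t) + shift (x t))\<bar> \<le> \<epsilon>" using dyn t by simp
    qed
    define g where "g = (\<lambda>t. \<bar>xave n (x t) - zbar\<bar>)"
    have G: "x (Suc t) \<in> S_set n zbar \<alpha> \<or> (mode (x (Suc t)) \<and> g (Suc t) \<le> g t - \<rho>)"
      if t: "t < T" and md: "mode (x t)" for t
    proof (cases "\<bar>xave n (x t) - zbar\<bar> \<le> \<sigma>")
      case True
      then have "shift (x t) = zbar - xave n (x t)" unfolding shift_def by (auto simp: max_def min_def)
      then have "\<forall>i<n. \<bar>x (Suc t) i - zbar\<bar> < \<alpha>" using MS(1)[OF t md] e assms(7) by fastforce
      then have "x (Suc t) \<in> S_set n zbar \<alpha>" using S_setI[OF n0(1) R] t by simp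
      then show ?thesis by simp
    next
      case False
      then have c: "\<bar>xave n (x t) + shift (x t) - zbar\<bar> = g t - \<sigma>"
        unfolding shift_def g_def using \<sigma>0 by (auto simp: max_def min_def abs_if)
      have "mode (x (Suc t))" unfolding mode_def
      proof (intro allI impI)
        fix i k assume "i < n" "k < n"
        then have "\<bar>x (Suc t) i - (xave n (x t) + shift (x t))\<bar> \<le> \<epsilon>"
           "\<bar>x (Suc t) k - (xave n (x t) + shift (x t))\<bar> \<le> \<epsilon>" using MS(1)[OF t md] by auto
        then have "\<bar>x (Suc t) i - x (Suc t) k\<bar> \<le> 2*\<epsilon>" by (simp add: abs_le_iff)
        then show "\<bar>x (Suc t) i - x (Suc t) k\<bar> \<le> rm" using e2 by simp
      qed
      moreover have "g (Suc t) \<le> g t - \<rho>"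
      proof -
        have "\<bar>xave n (x (Suc t)) - (xave n (x t) + shift (x t))\<bar> \<le> \<epsilon>"
          by (rule xave_close[OF n0(1)]) (use MS(1)[OF t md] in simp)
        then show ?thesis using c unfolding g_def \<rho>_def by linarith
      qed
      ultimately show ?thesis by simp
    qed
    have P1: "(\<exists>t'<t. mode (x t')) \<or> (\<forall>i<n. \<forall>k<n. \<bar>x t i - x t k\<bar> \<le> q^t + 2*\<epsilon>/wm)"
      if "t \<le> T1" for t
      using that
    proof (induction t)
      case 0
      have "\<forall>i<n. \<forall>k<n. \<bar>x 0 i - x 0 k\<bar> \<le> 1" 
      proof (intro allI impI)
        fix i k assume "i < n" "k < n"
        then have "0 \<le> x 0 i" "x 0 i \<le> 1" "0 \<le> x 0 k" "x 0 k \<le> 1" using R[of 0] by auto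
        then show "\<bar>x 0 i - x 0 k\<bar> \<le> 1" by (simp add: abs_le_iff)
      qed
      moreover have "0 \<le> 2*\<epsilon>/wm" using e wm by simp
      ultimately show ?case by fastforce
    next
      case (Suc t)
      then have tT: "t < T" "t \<le> T1" unfolding T_def by auto
      show ?case
      proof (cases "(\<exists>t'<t. mode (x t')) \<or> mode (x t)")
        case True then show ?thesis using less_SucI by blast
      next
        case False
        then have sp: "\<forall>i<n. \<forall>k<n. \<bar>x t i - x t k\<bar> \<le> q^t + 2*\<epsilon>/wm" using Suc tT by blast
        have "q * (q^t + 2*\<epsilon>/wm) + 2*\<epsilon> = q^Suc t + 2*\<epsilon>/wm"
          unfolding q_def using wm by (simp add: field_simps)
        then show ?thesis using SP[OF tT(1) _ sp] False by simp
      qed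
    qed
    obtain t0 where t0: "t0 \<le> T1" "mode (x t0)"
    proof (cases "\<exists>t'<T1. mode (x t')")
      case True then show ?thesis using that by (meson less_imp_le)
    next
      case False
      then have "\<forall>i<n. \<forall>k<n. \<bar>x T1 i - x T1 k\<bar> \<le> q^T1 + 2*\<epsilon>/wm" using P1[of T1] by blast
      then have "mode (x T1)" unfolding mode_def using T1 e3 by fastforce
      then show ?thesis using that by blast
    qed
    have P2: "(\<exists>t\<in>{1..T}. x t \<in> S_set n zbar \<alpha>) \<or> (mode (x (t0+k)) \<and> g (t0+k) \<le> 1 - real k * \<rho>)"
      if "t0 + k \<le> T1 + K" for k
      using that
    proof (induction k)
      case 0
      have "0 \<le> xave n (x t0)" "xave n (x t0) \<le> 1" using xave_bounds[OF n0(1) R] t0 unfolding T_def by auto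
      then have "g t0 \<le> 1" unfolding g_def using assms(5,6) by auto
      then show ?case using t0 by simp
    next
      case (Suc k)
      then have tk: "t0 + k < T" unfolding T_def by simp
      show ?case
      proof (cases "\<exists>t\<in>{1..T}. x t \<in> S_set n zbar \<alpha>")
        case True then show ?thesis by simp
      next
        case False
        then have IH: "mode (x (t0+k)) \<and> g (t0+k) \<le> 1 - real k * \<rho>" using Suc by simp
        from G[OF tk] IH have "x (Suc (t0 + k)) \<in> S_set n zbar \<alpha> \<or>
            (mode (x (Suc (t0 + k))) \<and> g (Suc (t0 + k)) \<le> g (t0 + k) - \<rho>)" by blast
        then show ?thesis
        proof
          assume "x (Suc (t0 + k)) \<in> S_set n zbar \<alpha>"
          moreover have "Suc (t0 + k) \<in> {1..T}" using tk by simp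
          ultimately show ?thesis by blast
        next
          assume "mode (x (Suc (t0 + k))) \<and> g (Suc (t0 + k)) \<le> g (t0 + k) - \<rho>"
          then show ?thesis using IH by (simp add: algebra_simps)
        qed
      qed
    qed
    have "g (t0 + K) \<ge> 0" unfolding g_def by simp
    then show "\<exists>t\<in>{1..T}. x t \<in> S_set n zbar \<alpha>" using P2[of K] t0 K by linarith
  qed
  show ?thesis unfolding robustly_reachable_def
  proof (intro exI[of _ T] conjI exI[of _ \<epsilon>] allI impI)
    show "0 < T" unfolding T_def by simp
    show "0 < \<epsilon>" "\<epsilon> < \<eta>" using e assms(4) by auto
    fix x0 :: state assume x0: "\<forall>i<n. 0 \<le> x0 i \<and> x0 i \<le> 1"
    show "x0 \<in> S_set n zbar \<alpha> \<or>
         (\<exists>(D :: state list \<Rightarrow> nat \<Rightarrow> real) (U :: state list \<Rightarrow> nat \<Rightarrow> nat \<Rightarrow> real).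
            (\<forall>h i. i < n \<longrightarrow> \<epsilon> \<le> D h i \<and> D h i < \<eta> \<and>
                (\<forall>j. - \<eta> + D h i \<le> U h j i \<and> U h j i \<le> \<eta> - D h i)) \<and>
            (\<forall>(x :: nat \<Rightarrow> state) (b :: nat \<Rightarrow> nat \<Rightarrow> nat \<Rightarrow> real).
               x 0 = x0 \<and>
               (\<forall>t<T. \<forall>i<n. \<forall>j \<in> nbr n r (x t) i - {i}.
                   \<bar>b t j i\<bar> \<le> D (map x [0..<Suc t]) i) \<and>
               (\<forall>t<T. \<forall>i<n.
                   x (Suc t) i = c6_step n r \<omega> (x t) (U (map x [0..<Suc t])) (b t) i)
               \<longrightarrow> (\<exists>t \<in> {1..T}. x t \<in> S_set n zbar \<alpha>)))"
      using ctrl main[OF x0] by blast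
  qed
qed

end
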